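(* Let $M\ge1$ and let $q>q_T$ be such that $\alpha(q)=a_1a_2\dots$ is irreducible and $a_1=M$. Then there is a strictly increasing sequence $(m_j)_{j\ge1}$ of positive integers with the following properties: - $a_1\dots a_{m_j}^-$ is fundamental for each $j$; - $m_{j+1}\le 2m_j$ for every $j$; - $m_1=2$ if $M=1$, and $m_1=1$ if $M\ge2$.
   Context: Sequences and word operations. $\Omega_M=\{0,\dots,M\}^{\mathbb N}$, with lexicographic order $\prec$ and left shift $\sigma$; words are compared via $\mathbf c\prec\mathbf d$ iff $\mathbf c0^\infty\prec\mathbf d0^\infty$. For a word $c_1\dots c_k$: - $c_1\dots c_k^\pm=c_1\dots c_{k-1}(c_k\pm1)$; - $\overline{c_1\dots c_k}=(M-c_1)\dots(M-c_k)$, and $\overline{(c_i)}=(M-c_i)$. Quasi-greedy expansion. For $q\in(1,M+1]$, $\alpha(q)$ is the lexicographically largest $(a_i)\in\Omega_M$ not ending in $0^\infty$ with $\sum a_iq^{-i}=1$. Irreducible sequences. Let $\mathbf V=\{(c_i):\overline{(c_i)}\preceq\sigma^n((c_i))\preceq(c_i)\ \forall n\ge0\}$. $(a_i)\in\mathbf V$ is irreducible if for every $j$: whenever $a_j>0$ and $(a_1\dots a_j^-)^\infty\in\mathbf V$, we have $a_1\dots a_j(\overline{a_1\dots a_j}^+)^\infty\prec(a_i)$. Fundamental words. A word $a_1\dots a_m$ ($m\ge2$) is fundamental if $\overline{a_1\dots a_{m-i}}\preceq a_{i+1}\dots a_m\prec a_1\dots a_{m-i}$ for $1\le i<m$. When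 $M\ge2$, a letter $a_1$ is fundamental if $M-a_1\le a_1<M$. The base $q_T$. Let $\tau_i$ be the parity of the binary digit sum of $i\ge0$. Put $\lambda_i=k+\tau_i-\tau_{i-1}$ if $M=2k$, and $\lambda_i=k+\tau_i$ if $M=2k+1$. Then $\alpha(q_T)=\lambda_1\dots\lambda_N(\overline{\lambda_1\dots\lambda_N}^+)^\infty$ with $N=1$ for even $M$ and $N=2$ for odd $M$. (Equivalently, $\alpha(q_T)=(k+1)(k-1)^\infty$ for $M=2k$, and $\alpha(q_T)=(k+1)(k+1)(kk)^\infty$ for $M=2k+1$.) *)

theory Defs
  imports Complex_Main
begin

text \<open>Conventions: sequences in Omega_M are functions nat => nat, indexed from 0,
  so that the paper's c_1 c_2 ... is c 0, c 1, ...  Words are lists of naturals.\<close>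

definition in_Omega :: "nat \<Rightarrow> (nat \<Rightarrow> nat) \<Rightarrow> bool" where
  "in_Omega M c \<longleftrightarrow> (\<forall>i. c i \<le> M)"

definition lex_less :: "(nat \<Rightarrow> nat) \<Rightarrow> (nat \<Rightarrow> nat) \<Rightarrow> bool" where
  "lex_less c d \<longleftrightarrow> (\<exists>n. (\<forall>i<n. c i = d i) \<and> c n < d n)"

definition lex_le :: "(nat \<Rightarrow> nat) \<Rightarrow> (nat \<Rightarrow> nat) \<Rightarrow> bool" where
  "lex_le c d \<longleftrightarrow> lex_less c d \<or> c = d"

definition shift :: "(nat \<Rightarrow> nat) \<Rightarrow> nat \<Rightarrow> (nat \<Rightarrow> nat)" where
  "shift c n = (\<lambda>i. c (i + n))"

definition pad0 :: "nat list \<Rightarrow> (nat \<Rightarrow> nat)" where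
  "pad0 w = (\<lambda>i. if i < length w then w ! i else 0)"

definition word_less :: "nat list \<Rightarrow> nat list \<Rightarrow> bool" where
  "word_less u v \<longleftrightarrow> lex_less (pad0 u) (pad0 v)"

definition word_le :: "nat list \<Rightarrow> nat list \<Rightarrow> bool" where
  "word_le u v \<longleftrightarrow> lex_le (pad0 u) (pad0 v)"

definition wbar :: "nat \<Rightarrow> nat list \<Rightarrow> nat list" where
  "wbar M w = map (\<lambda>x. M - x) w"

definition sbar :: "nat \<Rightarrow> (nat \<Rightarrow> nat) \<Rightarrow> (nat \<Rightarrow> nat)" where
  "sbar M c = (\<lambda>i. M - c i)"

definition wplus :: "nat list \<Rightarrow> nat list" where
  "wplus w = butlast w @ [last w + 1]"

definition wminus :: "nat list \<Rightarrow> nat list" where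
  "wminus w = butlast w @ [last w - 1]"

definition prefix_word :: "(nat \<Rightarrow> nat) \<Rightarrow> nat \<Rightarrow> nat list" where
  "prefix_word a n = map a [0..<n]"

definition per :: "nat list \<Rightarrow> (nat \<Rightarrow> nat)" where
  "per w = (\<lambda>i. w ! (i mod length w))"

definition conc :: "nat list \<Rightarrow> (nat \<Rightarrow> nat) \<Rightarrow> (nat \<Rightarrow> nat)" where
  "conc u v = (\<lambda>i. if i < length u then u ! i else v (i - length u))"

text \<open>Quasi-greedy expansion: alpha_exp M q a means alpha(q) = a.\<close>
definition expansion_of_one :: "nat \<Rightarrow> real \<Rightarrow> (nat \<Rightarrow> nat) \<Rightarrow> bool" where
  "expansion_of_one M q a \<longleftrightarrow> in_Omega M a \<and> (\<forall>n. \<exists>i\<ge>n. a i \<noteq> 0)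
     \<and> (\<lambda>i. real (a i) / q ^ Suc i) sums 1"

definition alpha_exp :: "nat \<Rightarrow> real \<Rightarrow> (nat \<Rightarrow> nat) \<Rightarrow> bool" where
  "alpha_exp M q a \<longleftrightarrow> 1 < q \<and> q \<le> real M + 1 \<and> expansion_of_one M q a
     \<and> (\<forall>b. expansion_of_one M q b \<longrightarrow> lex_le b a)"

definition in_V :: "nat \<Rightarrow> (nat \<Rightarrow> nat) \<Rightarrow> bool" where
  "in_V M c \<longleftrightarrow> (\<forall>n. lex_le (sbar M c) (shift c n) \<and> lex_le (shift c n) c)"

definition irreducible_seq :: "nat \<Rightarrow> (nat \<Rightarrow> nat) \<Rightarrow> bool" where
  "irreducible_seq M a \<longleftrightarrow> in_V M a \<and>
     (\<forall>j\<ge>1. a (j - 1) > 0 \<and> in_V M (per (wminus (prefix_word a j))) \<longrightarrow>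
        lex_less (conc (prefix_word a j) (per (wplus (wbar M (prefix_word a j))))) a)"

definition fundamental :: "nat \<Rightarrow> nat list \<Rightarrow> bool" where
  "fundamental M w \<longleftrightarrow>
     (length w \<ge> 2 \<and>
       (\<forall>i. 1 \<le> i \<and> i < length w \<longrightarrow>
          word_le (wbar M (take (length w - i) w)) (drop i w) \<and>
          word_less (drop i w) (take (length w - i) w)))
   \<or> (length w = 1 \<and> M \<ge> 2 \<and> M - w ! 0 \<le> w ! 0 \<and> w ! 0 < M)"

fun bitsum :: "nat \<Rightarrow> nat" where
  "bitsum n = (if n = 0 then 0 else n mod 2 + bitsum (n div 2))"

definition tau :: "nat \<Rightarrow> int" where
  "tau i = int (bitsum i mod 2)"

definition lam :: "nat \<Rightarrow> nat \<Rightarrow> nat" where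
  "lam M i = (if even M then nat (int (M div 2) + tau i - tau (i - 1))
              else nat (int (M div 2) + tau i))"

definition lamN :: "nat \<Rightarrow> nat" where
  "lamN M = (if even M then 1 else 2)"

definition alphaT :: "nat \<Rightarrow> (nat \<Rightarrow> nat)" where
  "alphaT M = (let w = map (lam M) [1..<lamN M + 1] in conc w (per (wplus (wbar M w))))"

definition qT :: "nat \<Rightarrow> real" where
  "qT M = (THE q. alpha_exp M q (alphaT M))"

end

theory Submission
  imports Defs
begin

definition lessat :: "(nat \<Rightarrow> nat) \<Rightarrow> (nat \<Rightarrow> nat) \<Rightarrow> nat \<Rightarrow> bool" where
  "lessat x y p \<longleftrightarrow> (\<forall>k<p. x k = y k) \<and> x p < y p"

lemma lex_less_iff: "lex_less x y \<longleftrightarrow> (\<exists>p. lessat x y p)"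
  by (simp add: lex_less_def lessat_def)

lemma lessat_asym: "lessat x y p \<Longrightarrow> lessat y x p' \<Longrightarrow> False"
  unfolding lessat_def
  by (metis linorder_neqE_nat not_less_iff_gr_or_eq)

lemma lessat_irrefl: "lessat x x p \<Longrightarrow> False"
  unfolding lessat_def by simp

lemma lex_le_lessat_False: "lex_le y x \<Longrightarrow> lessat x y p \<Longrightarrow> False"
  unfolding lex_le_def lex_less_iff using lessat_asym lessat_irrefl by blast

lemma lex_trich: assumes "\<not> lex_le x y" shows "lex_less y x"
proof -
  have "x \<noteq> y" using assms by (auto simp: lex_le_def)
  then obtain k where "x k \<noteq> y k" by auto
  define p where "p = (LEAST k. x k \<noteq> y k)"
  have p1: "x p \<noteq> y p" unfolding p_def by (rule LeastI) fact
  have p2: "\<forall>k<p. x k = y k" unfolding p_def using not_less_Least by blast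
  have "\<not> lessat x y p" using assms by (auto simp: lex_le_def lex_less_iff)
  then have "y p < x p" using p1 p2 by (auto simp: lessat_def)
  then show ?thesis using p2 unfolding lex_less_iff lessat_def by (intro exI[of _ p]) simp
qed

lemma lex_le_cases: "lex_le x y \<Longrightarrow> (\<forall>k<L. x k = y k) \<or> (\<exists>p<L. lessat x y p)"
  unfolding lex_le_def lex_less_iff lessat_def
  by (metis not_less order.strict_trans2)

lemma pad0_nth: "k < length u \<Longrightarrow> pad0 u k = u ! k"
  by (simp add: pad0_def)

lemma word_less_eqlen:
  assumes "length u = L" "length w = L"
  shows "word_less u w \<longleftrightarrow> (\<exists>p<L. (\<forall>k<p. u!k = w!k) \<and> u!p < w!p)"
proof
  assume "word_less u w"
  then obtain p where p: "lessat (pad0 u) (pad0 w) p" by (auto simp: word_less_def lex_less_iff)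
  have "p < L"
  proof (rule ccontr)
    assume "\<not> p < L" then show False using p assms by (auto simp: lessat_def pad0_def)
  qed
  then show "\<exists>p<L. (\<forall>k<p. u!k = w!k) \<and> u!p < w!p"
    using p assms by (intro exI[of _ p]) (auto simp: lessat_def pad0_def)
next
  assume "\<exists>p<L. (\<forall>k<p. u!k = w!k) \<and> u!p < w!p"
  then obtain p where "p < L" "\<forall>k<p. u!k = w!k" "u!p < w!p" by blast
  then have "lessat (pad0 u) (pad0 w) p" using assms by (auto simp: lessat_def pad0_def)
  then show "word_less u w" by (auto simp: word_less_def lex_less_iff)
qed

lemma word_le_eqlen:
  assumes "length u = L" "length w = L"
  shows "word_le u w \<longleftrightarrow> word_less u w \<or> (\<forall>k<L. u!k = w!k)"
proof -
  have "pad0 u = pad0 w \<longleftrightarrow> (\<forall>k<L. u!k = w!k)"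
  proof
    assume "pad0 u = pad0 w"
    then show "\<forall>k<L. u!k = w!k" using assms by (metis pad0_nth)
  next
    assume "\<forall>k<L. u!k = w!k"
    then show "pad0 u = pad0 w" using assms by (auto simp: pad0_def)
  qed
  then show ?thesis by (simp add: word_le_def word_less_def lex_le_def)
qed

definition FU :: "nat list \<Rightarrow> nat \<Rightarrow> bool" where
  "FU v i \<longleftrightarrow> (\<exists>p<length v - i. (\<forall>k<p. v!(i+k) = v!k) \<and> v!(i+p) < v!p)"

definition FL :: "nat \<Rightarrow> nat list \<Rightarrow> nat \<Rightarrow> bool" where
  "FL M v i \<longleftrightarrow> (\<exists>p<length v - i. (\<forall>k<p. M - v!k = v!(i+k)) \<and> M - v!p < v!(i+p))
      \<or> (\<forall>k<length v - i. M - v!k = v!(i+k))"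

lemma fundamental_iff:
  assumes "length v \<ge> 2"
  shows "fundamental M v \<longleftrightarrow> (\<forall>i. 1 \<le> i \<and> i < length v \<longrightarrow> FL M v i \<and> FU v i)"
proof -
  have *: "word_le (wbar M (take (length v - i) v)) (drop i v) \<longleftrightarrow> FL M v i"
     "word_less (drop i v) (take (length v - i) v) \<longleftrightarrow> FU v i" if "i < length v" for i
  proof -
    have l: "length (wbar M (take (length v - i) v)) = length v - i" "length (drop i v) = length v - i"
      "length (take (length v - i) v) = length v - i" using that by (auto simp: wbar_def)
    show "word_le (wbar M (take (length v - i) v)) (drop i v) \<longleftrightarrow> FL M v i"
      unfolding word_le_eqlen[OF l(1,2)] word_less_eqlen[OF l(1,2)] FL_def
      by (auto simp: wbar_def)
    show "word_less (drop i v) (take (length v - i) v) \<longleftrightarrow> FU v i"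
      unfolding word_less_eqlen[OF l(2,3)] FU_def
      by auto
  qed
  show ?thesis using assms unfolding fundamental_def by (auto simp: *)
qed


lemma wminus_prefix:
  assumes "m \<ge> 1"
  shows "length (wminus (prefix_word a m)) = m"
    "k < m \<Longrightarrow> wminus (prefix_word a m) ! k = (if k = m - 1 then a k - 1 else a k)"
proof -
  have pw: "prefix_word a m = map a [0..<m-1] @ [a (m-1)]"
    using assms unfolding prefix_word_def
    by (metis Suc_diff_1 le_eq_less_or_eq less_one map_append list.map upt_Suc_append zero_le
        add_0 less_Suc_eq_le not_less)
  show "length (wminus (prefix_word a m)) = m" using assms by (simp add: wminus_def pw)
  show "k < m \<Longrightarrow> wminus (prefix_word a m) ! k = (if k = m - 1 then a k - 1 else a k)"
    using assms by (auto simp: wminus_def pw nth_append)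
qed

lemma per_nth: "per v k = v ! (k mod length v)" by (simp add: per_def)

lemma fund_inV:
  assumes F: "fundamental M v" and m2: "length v \<ge> 2" and bd: "\<forall>k<length v. v!k \<le> M"
  shows "in_V M (per v)"
proof -
  define m where "m = length v"
  define P where "P = per v"
  have m0: "m > 0" using m2 m_def by linarith
  have Pk: "P k = v ! (k mod m)" for k by (simp add: P_def m_def per_def)
  have Pb: "P k \<le> M" for k using bd Pk m0 m_def by simp
  have Pm: "P (x + m) = P x" for x by (simp add: Pk)
  have sm: "shift P n = shift P (n mod m)" for n
    unfolding shift_def by (rule ext) (simp add: Pk mod_add_right_eq)
  have s0: "shift P 0 = P" by (simp add: shift_def)
  have si: "shift P i k = v!(i+k)" "P k = v!k" if "i < m" "k < m - i" for i k
    using that by (auto simp: shift_def Pk add.commute)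
  have FF: "FL M v i \<and> FU v i" if "1 \<le> i" "i < m" for i
    using F m2 that fundamental_iff m_def by blast
  have v0: "M - v!0 < v!0"
  proof -
    have "1 \<le> m-1" "m-1 < m" using m2 m_def by auto
    then have "FL M v (m-1)" "FU v (m-1)" using FF[of "m-1"] by auto
    then show ?thesis unfolding FL_def FU_def using m2 m_def
      by (auto simp: Suc_leI)
  qed
  have upper: "lex_le (shift P n) P" for n
  proof (cases "n mod m = 0")
    case True then show ?thesis using sm[of n] s0 by (simp add: lex_le_def)
  next
    case False
    define i where "i = n mod m"
    have i: "1 \<le> i" "i < m" using False m0 i_def by auto
    then obtain p where p: "p < m - i" "\<forall>k<p. v!(i+k) = v!k" "v!(i+p) < v!p"
      using FF[OF i] m_def unfolding FU_def by auto
    have "lessat (shift P i) P p" unfolding lessat_def using p si[OF i(2)] by auto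
    then show ?thesis using sm i_def by (auto simp: lex_le_def lex_less_iff)
  qed
  have key: "\<forall>n. \<not> lessat (shift P n) (sbar M P) d" for d
  proof (induction d rule: less_induct)
    case (less d)
    show ?case
    proof (intro allI notI)
      fix n assume L0: "lessat (shift P n) (sbar M P) d"
      define i where "i = n mod m"
      have L: "lessat (shift P i) (sbar M P) d" using L0 sm i_def by simp
      have im: "i < m" using i_def m0 by simp
      show False
      proof (cases "i = 0")
        case True
        then have "lessat P (sbar M P) d" using L s0 by simp
        moreover have "P 0 = v!0" using Pk by simp
        ultimately show False using v0 unfolding lessat_def sbar_def
          by (cases "d = 0") auto
      next
        case False
        then have i1: "1 \<le> i" by simp
        have "FL M v i" using FF[OF i1 im] by simp
        then consider (s) p where "p < m - i" "\<forall>k<p. M - v!k = v!(i+k)" "M - v!p < v!(i+p)"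
          | (e) "\<forall>k<m - i. M - v!k = v!(i+k)"
          unfolding FL_def m_def by blast
        then show False
        proof cases
          case s
          then have "lessat (sbar M P) (shift P i) p" unfolding lessat_def sbar_def
            using si[OF im] by auto
          then show False using L lessat_asym by blast
        next
          case e
          have eqs: "\<forall>k<m - i. sbar M P k = shift P i k" using e si[OF im] by (auto simp: sbar_def)
          have dge: "d \<ge> m - i"
          proof (rule ccontr)
            assume "\<not> d \<ge> m - i"
            then show False using eqs L by (auto simp: lessat_def)
          qed
          define j0 where "j0 = d - (m - i)"
          have j0d: "j0 < d" using j0_def dge im i1 by simp
          have "lessat (shift P (m - i)) (sbar M P) j0"
            unfolding lessat_def
          proof (intro conjI allI impI)
            fix j assume "j < j0"
            then have "j + (m - i) < d" using j0_def dge by simp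
            then have "shift P i (j + (m-i)) = sbar M P (j + (m-i))" using L by (auto simp: lessat_def)
            moreover have "j + (m - i) + i = j + m" using im by simp
            ultimately have "P j = M - P (j + (m - i))" by (simp add: shift_def sbar_def Pm)
            then show "shift P (m - i) j = sbar M P j" using Pb[of "j + (m-i)"] Pb[of j]
              by (simp add: shift_def sbar_def)
          next
            have "shift P i d < sbar M P d" using L by (simp add: lessat_def)
            moreover have "d + i = j0 + m" "d = j0 + (m - i)" using im dge j0_def by auto
            ultimately have "P j0 < M - P (j0 + (m - i))" by (simp add: shift_def sbar_def Pm)
            then show "shift P (m - i) j0 < sbar M P j0" using Pb[of "j0 + (m-i)"] Pb[of j0]
              by (simp add: shift_def sbar_def)
          qed
          then show False using less.IH j0d by blast
        qed
      qed
    qed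
  qed
  have "lex_le (sbar M P) (shift P n)" for n
  proof (rule ccontr)
    assume "\<not> lex_le (sbar M P) (shift P n)"
    then obtain d where "lessat (shift P n) (sbar M P) d" using lex_trich lex_less_iff by blast
    then show False using key by blast
  qed
  then show ?thesis using upper unfolding in_V_def P_def by blast
qed

lemma fund1_inV:
  assumes "length v = 1" "M - v!0 \<le> v!0"
  shows "in_V M (per v)"
proof -
  have P: "per v = (\<lambda>_. v!0)" using assms by (auto simp: per_def)
  have "lex_le (\<lambda>_. M - v!0) (\<lambda>_. v!0)"
  proof (cases "M - v!0 = v!0")
    case True then show ?thesis by (simp add: lex_le_def)
  next
    case False
    then have "lessat (\<lambda>_. M - v!0) (\<lambda>_. v!0) 0" using assms by (simp add: lessat_def)
    then show ?thesis by (auto simp: lex_le_def lex_less_iff)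
  qed
  then show ?thesis unfolding in_V_def P by (simp add: shift_def sbar_def lex_le_def)
qed


definition noBar :: "(nat \<Rightarrow> nat) \<Rightarrow> nat \<Rightarrow> nat \<Rightarrow> bool" where
  "noBar a M n \<longleftrightarrow> (\<forall>i. 1 \<le> i \<and> i < n \<longrightarrow> \<not> (\<forall>k<n-i. a (i+k) = M - a k))"

lemma fund_noBar:
  assumes m2: "m \<ge> 2" and pos: "a (m-1) > 0" and F: "fundamental M (wminus (prefix_word a m))"
  shows "noBar a M m"
  unfolding noBar_def
proof (intro allI impI notI)
  fix i assume i: "1 \<le> i \<and> i < m" and E: "\<forall>k<m-i. a (i+k) = M - a k"
  define v where "v = wminus (prefix_word a m)"
  have lv: "length v = m" using wminus_prefix m2 v_def by simp
  have vk: "k < m \<Longrightarrow> v ! k = (if k = m - 1 then a k - 1 else a k)" for k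
    using wminus_prefix(2)[where m=m and a=a and k=k] m2 v_def by simp
  have "FL M v i" using F fundamental_iff[of v M] lv m2 i v_def by auto
  then consider (s) p where "p < m - i" "\<forall>k<p. M - v!k = v!(i+k)" "M - v!p < v!(i+p)"
    | (e) "\<forall>k<m - i. M - v!k = v!(i+k)"
    unfolding FL_def lv by blast
  then show False
  proof cases
    case s
    show False
    proof (cases "i + p = m - 1")
      case True
      have "p < m - 1" using i s True by simp
      then have "v!p = a p" "v!(i+p) = a (m-1) - 1" using vk True s i by auto
      moreover have "a (m-1) = M - a p" using E s True by (metis)
      ultimately show False using s pos by simp
    next
      case False
      then have "v!p = a p" "v!(i+p) = a (i+p)" using vk s i by auto
      then show False using E s by simp
    qed
  next
    case e
    define p where "p = m - 1 - i"
    have p: "p < m - i" "i + p = m - 1" "p < m - 1" using i p_def by auto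
    have "v!p = a p" "v!(i+p) = a (m-1) - 1" using vk p by auto
    moreover have "a (m-1) = M - a p" using E p by metis
    ultimately show False using e p pos by (metis diff_less less_numeral_extra(1) less_irrefl)
  qed
qed

lemma noBar_fund:
  assumes V: "in_V M a" and bd: "\<forall>k. a k \<le> M" and n2: "n \<ge> 2" and pos: "a (n-1) > 0"
    and NB: "noBar a M n"
  shows "fundamental M (wminus (prefix_word a n))"
proof -
  define v where "v = wminus (prefix_word a n)"
  have lv: "length v = n" using wminus_prefix n2 v_def by simp
  have vk: "k < n \<Longrightarrow> v ! k = (if k = n - 1 then a k - 1 else a k)" for k
    using wminus_prefix(2)[where m=n and a=a and k=k] n2 v_def by simp
  have "FL M v i \<and> FU v i" if i: "1 \<le> i" "i < n" for i
  proof
    have "lex_le (shift a i) a" using V by (simp add: in_V_def)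
    from lex_le_cases[OF this, of "n - i"]
    consider (e) "\<forall>k<n-i. a (k+i) = a k" | (s) p where "p < n - i" "lessat (shift a i) a p"
      by (auto simp: shift_def)
    then show "FU v i"
    proof cases
      case e
      define p where "p = n - 1 - i"
      have p: "p < n - i" "i + p = n - 1" "p < n - 1" using i p_def by auto
      have "\<forall>k<p. v!(i+k) = v!k" using e vk p by (auto simp: add.commute)
      moreover have "a (n-1) = a p" using e p by (metis add.commute)
      then have "v!(i+p) < v!p" using vk p pos by simp
      ultimately show ?thesis unfolding FU_def lv using p by blast
    next
      case s
      then have s1: "\<forall>k<p. a (k+i) = a k" "a (p+i) < a p" by (auto simp: lessat_def shift_def)
      have "\<forall>k<p. v!(i+k) = v!k" using s1 vk s by (auto simp: add.commute)
      moreover have "v!(i+p) < v!p" using s1 vk s by (auto simp: add.commute)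
      ultimately show ?thesis unfolding FU_def lv using s by blast
    qed
  next
    have "lex_le (sbar M a) (shift a i)" using V by (simp add: in_V_def)
    from lex_le_cases[OF this, of "n - i"]
    consider (e) "\<forall>k<n-i. M - a k = a (k+i)" | (s) p where "p < n - i" "lessat (sbar M a) (shift a i) p"
      by (auto simp: shift_def sbar_def)
    then show "FL M v i"
    proof cases
      case e
      then show ?thesis using NB i unfolding noBar_def by (metis add.commute)
    next
      case s
      then have s1: "\<forall>k<p. M - a k = a (k+i)" "M - a p < a (p+i)" by (auto simp: lessat_def shift_def sbar_def)
      have eqp: "\<forall>k<p. M - v!k = v!(i+k)" using s1 vk s by (auto simp: add.commute)
      show ?thesis
      proof (cases "i + p = n - 1")
        case False
        then have "M - v!p < v!(i+p)" using s1 vk s by (auto simp: add.commute)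
        then show ?thesis unfolding FL_def lv using s eqp by blast
      next
        case True
        have "p < n - 1" using True i by simp
        then have vv: "v!p = a p" "v!(i+p) = a (n-1) - 1" using vk True s by auto
        have "M - a p \<le> a (n-1) - 1" using s1 True by (simp add: add.commute)
        then consider "M - v!p < v!(i+p)" | "M - v!p = v!(i+p)" using vv by linarith
        then show ?thesis
        proof cases
          case 1 then show ?thesis unfolding FL_def lv using s eqp by blast
        next
          case 2
          have "\<forall>k<n-i. M - v!k = v!(i+k)"
          proof (intro allI impI)
            fix k assume "k < n - i"
            then have "k < p \<or> k = p" using True i by auto
            then show "M - v!k = v!(i+k)" using eqp 2 by auto
          qed
          then show ?thesis unfolding FL_def lv by blast
        qed
      qed
    qed
  qed
  then show ?thesis using fundamental_iff[of v M] lv n2 v_def by auto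
qed


lemma wplus_nth:
  assumes "w \<noteq> []"
  shows "length (wplus w) = length w"
    "k < length w \<Longrightarrow> wplus w ! k = (if k = length w - 1 then w!k + 1 else w!k)"
  using assms by (auto simp: wplus_def nth_append nth_butlast last_conv_nth)

lemma step:
  assumes V: "in_V M a" and bd: "\<forall>k. a k \<le> M" and IR: "irreducible_seq M a"
    and m1: "m \<ge> 1" and pos: "a (m-1) > 0" and F: "fundamental M (wminus (prefix_word a m))"
  shows "\<exists>n. m < n \<and> n \<le> 2*m \<and> a (n-1) > 0 \<and> fundamental M (wminus (prefix_word a n))"
proof -
  define v where "v = wminus (prefix_word a m)"
  have lv: "length v = m" using wminus_prefix m1 v_def by simp
  have vk: "k < m \<Longrightarrow> v ! k = (if k = m - 1 then a k - 1 else a k)" for k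
    using wminus_prefix(2)[where m=m and a=a and k=k] m1 v_def by simp
  have inV: "in_V M (per v)"
  proof (cases "m \<ge> 2")
    case True
    have "\<forall>k<length v. v!k \<le> M" using vk lv bd by (metis diff_le_self order.trans)
    then show ?thesis using fund_inV[of M v] F v_def lv True by simp
  next
    case False
    then have "length v = 1" using lv m1 by simp
    moreover have "M - v!0 \<le> v!0" using F False lv unfolding fundamental_def v_def by auto
    ultimately show ?thesis using fund1_inV by blast
  qed
  define w where "w = prefix_word a m"
  define X where "X = per (wplus (wbar M w))"
  have lw: "length (wbar M w) = m" "wbar M w \<noteq> []" using m1 by (auto simp: w_def prefix_word_def wbar_def)
  have Xk: "X k = (if k = m - 1 then M - a k + 1 else M - a k)" if "k < m" for k
  proof -
    have "X k = wplus (wbar M w) ! k" using that wplus_nth(1)[OF lw(2)] lw by (simp add: X_def per_def)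
    also have "\<dots> = (if k = m - 1 then M - a k + 1 else M - a k)"
      using wplus_nth(2)[OF lw(2), of k] that lw by (simp add: wbar_def w_def prefix_word_def)
    finally show ?thesis .
  qed
  have "lex_less (conc w X) a" using IR pos inV m1 unfolding irreducible_seq_def w_def X_def v_def by blast
  then obtain p where p: "lessat (conc w X) a p" by (auto simp: lex_less_iff)
  have cw: "conc w X k = (if k < m then a k else X (k - m))" for k
    by (simp add: conc_def w_def prefix_word_def)
  have pm: "p \<ge> m"
  proof (rule ccontr)
    assume "\<not> p \<ge> m" then show False using p cw by (simp add: lessat_def)
  qed
  have pX: "\<forall>k. m \<le> k \<and> k < p \<longrightarrow> X (k - m) = a k" "X (p - m) < a p"
    using p pm cw by (auto simp: lessat_def)
  have ex: "\<exists>k<m. a (m+k) \<noteq> M - a k"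
  proof (rule ccontr)
    assume "\<not> ?thesis"
    then have E: "\<forall>k<m. a (m+k) = M - a k" by auto
    show False
    proof (cases "p - m < m - 1")
      case True
      then have pm1: "p - m < m" by simp
      have "X (p - m) = M - a (p-m)" using Xk[of "p-m"] pm1 True by simp
      moreover have "a (m + (p-m)) = M - a (p-m)" using E pm1 by blast
      ultimately have "X (p - m) = M - a (p-m)" "a p = M - a (p-m)" using pm by auto
      then show False using pX(2) by simp
    next
      case False
      have a2: "a (m + (m-1)) = M - a (m-1)" using E[rule_format, of "m-1"] m1 by simp
      have X1: "X (m-1) = M - a (m-1) + 1" using Xk m1 by simp
      show False
      proof (cases "p - m = m - 1")
        case True
        then have "p = m + (m-1)" using pm by simp
        then show False using pX(2) a2 X1 True by simp
      next
        case False
        then have "m + (m-1) < p" using \<open>\<not> p - m < m - 1\<close> pm by simp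
        then have "X (m + (m-1) - m) = a (m + (m-1))" using pX(1)[rule_format, of "m + (m-1)"] by simp
        then show False using a2 X1 by simp
      qed
    qed
  qed
  define k0 where "k0 = (LEAST k. a (m+k) \<noteq> M - a k)"
  have k0a: "a (m+k0) \<noteq> M - a k0" unfolding k0_def using ex by (metis (mono_tags, lifting) LeastI)
  have k0m: "k0 < m" unfolding k0_def using ex by (metis (mono_tags, lifting) Least_le order.strict_trans1)
  have k0b: "\<forall>k<k0. a (m+k) = M - a k" unfolding k0_def using not_less_Least by blast
  have k0c: "M - a k0 < a (m+k0)"
  proof -
    have "lex_le (sbar M a) (shift a m)" using V by (simp add: in_V_def)
    from lex_le_cases[OF this, of "Suc k0"]
    consider "\<forall>k<Suc k0. M - a k = a (k+m)" | p' where "p' < Suc k0" "lessat (sbar M a) (shift a m) p'"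
      by (auto simp: shift_def sbar_def)
    then show ?thesis
    proof cases
      case 1 then show ?thesis using k0a by (simp add: add.commute)
    next
      case 2
      then have "M - a p' < a (p' + m)" by (simp add: lessat_def sbar_def shift_def)
      moreover have "p' = k0" using 2 k0b calculation by (metis add.commute less_Suc_eq less_irrefl)
      ultimately show ?thesis by (simp add: add.commute)
    qed
  qed
  define n where "n = m + k0 + 1"
  have n: "m < n" "n \<le> 2*m" "n \<ge> 2" "a (n-1) > 0" using k0m k0c m1 n_def by auto
  have NB: "noBar a M n"
    unfolding noBar_def
  proof (intro allI impI notI)
    fix i assume i: "1 \<le> i \<and> i < n" and E: "\<forall>k<n-i. a (i+k) = M - a k"
    consider "i < m" | "i = m" | "i > m" by linarith
    then show False
    proof cases
      case 1
      then have m2: "m \<ge> 2" using i by simp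
      have "noBar a M m" using fund_noBar[OF m2 pos F] .
      moreover have "\<forall>k<m-i. a (i+k) = M - a k" using E n_def 1 by auto
      ultimately show False using i 1 unfolding noBar_def by blast
    next
      case 2
      then show False using E k0a n_def by simp
    next
      case 3
      define j where "j = i - m"
      have j: "1 \<le> j" "j \<le> k0" "i = m + j" using 3 i j_def n_def by auto
      have eqk: "a (j+k) = a k" if "k < k0 - j" for k
      proof -
        have "a (i+k) = M - a k" using E that j n_def by simp
        moreover have "a (m + (j+k)) = M - a (j+k)" using k0b that by simp
        ultimately have "M - a k = M - a (j+k)" using j by (simp add: add.assoc)
        then show ?thesis using bd by (metis diff_diff_cancel)
      qed
      have "k0 - j < n - i" using j n_def by simp
      then have "a (i + (k0 - j)) = M - a (k0 - j)" using E by blast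
      moreover have "i + (k0 - j) = m + k0" using j by simp
      ultimately have "M - a (k0 - j) > M - a (j + (k0 - j))" using k0c j by simp
      then have lt: "a (k0 - j) < a (k0 - j + j)" by (simp add: add.commute)
      have "lessat a (shift a j) (k0 - j)"
        unfolding lessat_def shift_def using eqk lt by (auto simp: add.commute)
      moreover have "lex_le (shift a j) a" using V by (simp add: in_V_def)
      ultimately show False using lex_le_lessat_False by blast
    qed
  qed
  have "fundamental M (wminus (prefix_word a n))" using noBar_fund[OF V bd n(3) n(4) NB] .
  then show ?thesis using n by blast
qed



definition val :: "real \<Rightarrow> (nat \<Rightarrow> nat) \<Rightarrow> real" where
  "val q x = suminf (\<lambda>i. real (x i) / q ^ Suc i)"

lemma summ:
  assumes q: "q > 1" and bd: "\<forall>i. x i \<le> K"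
  shows "summable (\<lambda>i. real (x i) / q ^ Suc i)"
proof (rule summable_comparison_test)
  show "summable (\<lambda>i. real K * (1/q) ^ i)"
    using q by (intro summable_mult summable_geometric) auto
  show "\<exists>N. \<forall>n\<ge>N. norm (real (x n) / q ^ Suc n) \<le> real K * (1/q) ^ n"
  proof (intro exI allI impI)
    fix n :: nat
    have qn: "q ^ n \<le> q ^ Suc n" "q ^ n > 0" using q by auto
    have "real (x n) / q ^ Suc n \<le> real K / q ^ Suc n"
      using bd q by (intro divide_right_mono) auto
    also have "\<dots> \<le> real K / q ^ n" using qn by (intro divide_left_mono) auto
    finally have "real (x n) / q ^ Suc n \<le> real K * (1/q) ^ n"
      by (simp add: power_one_over)
    moreover have "norm (real (x n) / q ^ Suc n) = real (x n) / q ^ Suc n" using q by simp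
    ultimately show "norm (real (x n) / q ^ Suc n) \<le> real K * (1/q) ^ n" by (simp only:)
  qed
qed

lemma val_sums:
  assumes "q > 1" "\<forall>i. x i \<le> K"
  shows "(\<lambda>i. real (x i) / q ^ Suc i) sums val q x"
  using summ[OF assms] by (simp add: val_def summable_sums)

lemma shift_bd: "\<forall>i. x i \<le> K \<Longrightarrow> \<forall>i. shift x n i \<le> K"
  by (simp add: shift_def)

lemma val_step:
  assumes q: "q > 1" and bd: "\<forall>i. x i \<le> K"
  shows "val q x = x 0 / q + val q (shift x 1) / q"
proof -
  have s: "summable (\<lambda>i. real (x i) / q ^ Suc i)" using summ[OF q bd] .
  have "(\<Sum>i. real (x (Suc i)) / q ^ Suc (Suc i)) = val q x - x 0 / q"
    using suminf_split_head[OF s] by (simp add: val_def)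
  moreover have "(\<Sum>i. real (x (Suc i)) / q ^ Suc (Suc i)) = val q (shift x 1) / q"
  proof -
    have "(\<lambda>i. real (x (Suc i)) / q ^ Suc (Suc i)) = (\<lambda>i. real (shift x 1 i) / q ^ Suc i / q)"
      by (rule ext) (simp add: shift_def field_simps)
    then show ?thesis unfolding val_def
      using suminf_divide[OF summ[OF q shift_bd[OF bd, of 1]]] by simp
  qed
  ultimately show ?thesis by simp
qed

lemma val_nonneg: "q > 1 \<Longrightarrow> \<forall>i. x i \<le> K \<Longrightarrow> val q x \<ge> 0"
  unfolding val_def by (intro suminf_nonneg summ) auto

lemma val_pos: assumes q: "q > 1" and bd: "\<forall>i. x i \<le> K" and nz: "x i \<noteq> 0" shows "val q x > 0"
  unfolding val_def using summ[OF q bd] q nz by (intro suminf_pos2[where i=i]) auto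

lemma val_prefix:
  assumes q: "q > 1"
  shows "\<forall>i. x i \<le> K \<Longrightarrow> \<forall>i. y i \<le> K \<Longrightarrow> \<forall>k<n. x k = y k \<Longrightarrow> val q x = val q y
     \<Longrightarrow> val q (shift x n) = val q (shift y n)"
proof (induction n arbitrary: x y)
  case 0
  then show ?case by (simp add: shift_def)
next
  case (Suc n)
  have "val q (shift x 1) = val q (shift y 1)"
    using val_step[OF q Suc.prems(1)] val_step[OF q Suc.prems(2)] Suc.prems(3,4) q by simp
  moreover have "\<forall>k<n. shift x 1 k = shift y 1 k" using Suc.prems(3) by (simp add: shift_def)
  ultimately have "val q (shift (shift x 1) n) = val q (shift (shift y 1) n)"
    using Suc.IH[OF shift_bd[OF Suc.prems(1)] shift_bd[OF Suc.prems(2)]] by blast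
  moreover have "shift (shift z 1) n = shift z (Suc n)" for z :: "nat \<Rightarrow> nat"
    by (rule ext) (simp add: shift_def)
  ultimately show ?case by simp
qed

definition eseq :: "nat \<Rightarrow> nat" where "eseq k = (if even k then 1 else 0)"
definition bseq :: "nat \<Rightarrow> nat" where "bseq k = (if k = 0 \<or> odd k then 1 else 0)"

lemma eseq_bd: "\<forall>i. eseq i \<le> 1" by (simp add: eseq_def)
lemma bseq_bd: "\<forall>i. bseq i \<le> 1" by (simp add: bseq_def)

lemma val_e:
  assumes q: "q > 1"
  shows "val q eseq * (q^2 - 1) = q"
proof -
  have s1: "shift eseq 1 = shift (shift eseq 1) 0" by (simp add: shift_def)
  have h1: "val q eseq = 1 / q + val q (shift eseq 1) / q"
    using val_step[OF q eseq_bd] by (simp add: eseq_def[of 0])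
  have h2: "val q (shift eseq 1) = val q eseq / q"
  proof -
    have "val q (shift eseq 1) = shift eseq 1 0 / q + val q (shift (shift eseq 1) 1) / q"
      using val_step[OF q shift_bd[OF eseq_bd]] by blast
    moreover have "shift (shift eseq 1) 1 = eseq" by (rule ext) (simp add: shift_def eseq_def)
    ultimately show ?thesis by (simp add: shift_def eseq_def)
  qed
  from h1 have "val q eseq = 1/q + (val q eseq / q) / q" by (simp only: h2)
  then have "val q eseq = 1/q + val q eseq / q^2" by (simp add: power2_eq_square)
  then show ?thesis using q by (simp add: field_simps power2_eq_square)
qed

lemma val_b:
  assumes q: "q > 1"
  shows "val q bseq = 1 / q + val q eseq / q"
proof -
  have "shift bseq 1 = eseq" by (rule ext) (simp add: shift_def eseq_def bseq_def)
  then show ?thesis using val_step[OF q bseq_bd] by (simp add: bseq_def[of 0])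
qed

lemma val_b_iff:
  assumes q: "q > 1"
  shows "val q bseq = 1 \<longleftrightarrow> q^3 - q^2 - 2*q + 1 = 0"
proof -
  define r where "r = q^2 - 1"
  have q2: "r > 0" using q unfolding r_def by (simp add: power2_eq_square) (smt (verit) mult_less_cancel_right1)
  have "val q eseq * r = q" using val_e[OF q] r_def by simp
  then have E: "val q eseq = q / r" using q2 by (simp add: field_simps)
  have "val q bseq = 1 / q + 1 / r" using val_b[OF q] E q by simp
  also have "1 / q + 1 / r = (r + q) / (q * r)" using q q2 by (simp add: field_simps)
  finally have vb: "val q bseq = (r + q) / (q * r)" .
  have "q * r > 0" using q q2 by simp
  then have "val q bseq = 1 \<longleftrightarrow> r + q = q * r" unfolding vb using q q2 by auto
  also have "\<dots> \<longleftrightarrow> q^3 - q^2 - 2*q + 1 = 0" unfolding r_def by (simp add: algebra_simps power2_eq_square power3_eq_cube) (simp only: eq_commute)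
  finally show ?thesis .
qed

lemma alphaT1: "alphaT 1 = bseq"
proof -
  have b: "bitsum 1 = 1" "bitsum 2 = 1" by (simp_all add: bitsum.simps[of 1] bitsum.simps[of 2] bitsum.simps[of 0])
  have t1: "tau (Suc 0) = 1" "tau (Suc (Suc 0)) = 1" using b by (simp_all add: tau_def numeral_2_eq_2)
  have l: "map (lam 1) [1..<lamN 1 + 1] = [1,1]"
    by (simp add: lamN_def lam_def t1 upt_rec)
  show ?thesis
    unfolding alphaT_def l Let_def
  proof (rule ext)
    fix k
    show "conc [1, 1] (per (wplus (wbar 1 [1, 1]))) k = bseq k"
    proof (cases "k < 2")
      case True then show ?thesis by (auto simp: conc_def bseq_def nth_Cons' less_2_cases_iff)
    next
      case False
      then have "odd k \<longleftrightarrow> odd (k - 2)" by auto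
      moreover have "per (wplus (wbar 1 [1, 1])) j = (if even j then 0 else 1)" for j
        by (simp add: per_def wplus_def wbar_def nth_Cons' mod2_eq_if) presburger
      ultimately show ?thesis using False by (simp add: conc_def bseq_def)
    qed
  qed
qed


lemma val_e_shift: "q > 1 \<Longrightarrow> val q (shift eseq 1) = val q eseq / q"
proof -
  assume q: "q > 1"
  have "val q (shift eseq 1) = shift eseq 1 0 / q + val q (shift (shift eseq 1) 1) / q"
    using val_step[OF q shift_bd[OF eseq_bd]] by blast
  moreover have "shift (shift eseq 1) 1 = eseq" by (rule ext) (simp add: shift_def eseq_def)
  ultimately show ?thesis by (simp add: shift_def eseq_def)
qed

definition cub :: "real \<Rightarrow> real" where "cub x = x^3 - x^2 - 2*x + 1"

lemma cub_gold: assumes "x > 1" "cub x = 0" shows "x^2 - x - 1 > 0"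
proof -
  have "x * (x^2 - x - 1) = x - 1" using assms(2) unfolding cub_def
    by (simp add: algebra_simps power2_eq_square power3_eq_cube)
  then have "x * (x^2 - x - 1) > 0" using assms(1) by simp
  then show ?thesis using assms(1) by (simp add: zero_less_mult_iff)
qed

lemma cub_unique: assumes "x > 1" "y > 1" "cub x = 0" "cub y = 0" shows "x = y"
proof (rule ccontr)
  assume ne: "x \<noteq> y"
  have f: "cub x - cub y = (x - y) * ((x^2 - x - 1) + (y^2 - y - 1) + x*y)"
    unfolding cub_def by (simp add: algebra_simps power2_eq_square power3_eq_cube)
  have "(x^2 - x - 1) + (y^2 - y - 1) + x*y > 0"
    using cub_gold[OF assms(1,3)] cub_gold[OF assms(2,4)] assms(1,2)
    by (smt (verit) mult_pos_pos)
  moreover have "x - y \<noteq> 0" using ne by simp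
  ultimately have "cub x - cub y \<noteq> 0" unfolding f by simp
  then show False using assms by simp
qed

lemma cub_exists: "\<exists>x. 1 < x \<and> x \<le> 2 \<and> cub x = 0"
proof -
  have "continuous_on {1..2} cub" unfolding cub_def by (intro continuous_intros)
  moreover have "cub 1 \<le> 0" "0 \<le> cub 2" by (simp_all add: cub_def)
  ultimately obtain x where x: "1 \<le> x" "x \<le> 2" "cub x = 0" using IVT'[of cub 1 0 2] by auto
  moreover have "x \<noteq> 1" using x by (auto simp: cub_def)
  ultimately have "1 < x" by simp
  then show ?thesis using x by blast
qed

lemma alpha_b: assumes q: "1 < q" "q \<le> 2" "cub q = 0" shows "alpha_exp 1 q bseq"
proof -
  have vb: "val q bseq = 1" using val_b_iff[OF q(1)] q(3) by (simp add: cub_def)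
  have ex: "expansion_of_one 1 q bseq"
    unfolding expansion_of_one_def in_Omega_def
  proof (intro conjI allI)
    show "bseq i \<le> 1" for i by (simp add: bseq_def)
    show "\<exists>i\<ge>n. bseq i \<noteq> 0" for n by (intro exI[of _ "2*n+1"]) (simp add: bseq_def)
    show "(\<lambda>i. real (bseq i) / q ^ Suc i) sums 1" using val_sums[OF q(1) bseq_bd] vb by simp
  qed
  have mx: "lex_le c bseq" if c: "expansion_of_one 1 q c" for c
  proof (rule ccontr)
    assume "\<not> lex_le c bseq"
    then obtain n where n: "lessat bseq c n" using lex_trich lex_less_iff by blast
    have cb: "\<forall>i. c i \<le> 1" using c by (simp add: expansion_of_one_def in_Omega_def)
    have bn: "bseq n = 0" "c n = 1" using n cb[rule_format, of n] by (auto simp: lessat_def bseq_def split: if_splits)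
    then have ne: "n \<noteq> 0" "even n" by (auto simp: bseq_def split: if_splits)
    have vc: "val q c = 1" using c val_sums[OF q(1) cb] sums_unique2 by (auto simp: expansion_of_one_def)
    have "val q (shift c n) = val q (shift bseq n)"
      using val_prefix[OF q(1) cb bseq_bd] n vc vb by (auto simp: lessat_def)
    moreover have "shift bseq n = shift eseq 1"
      using ne by (intro ext) (auto simp: shift_def bseq_def eseq_def)
    moreover have "val q (shift c n) = 1 / q + val q (shift c (Suc n)) / q"
    proof -
      have "val q (shift c n) = shift c n 0 / q + val q (shift (shift c n) 1) / q"
        using val_step[OF q(1) shift_bd[OF cb]] by blast
      moreover have "shift (shift c n) 1 = shift c (Suc n)" by (rule ext) (simp add: shift_def)
      ultimately show ?thesis using bn by (simp add: shift_def)
    qed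
    moreover have "val q (shift c (Suc n)) > 0"
    proof -
      obtain i where i: "i \<ge> Suc n" "c i \<noteq> 0" using c by (auto simp: expansion_of_one_def)
      then have "shift c (Suc n) (i - Suc n) \<noteq> 0" by (simp add: shift_def)
      then show ?thesis using val_pos[OF q(1) shift_bd[OF cb]] by blast
    qed
    moreover have "val q eseq \<le> 1"
    proof -
      have g: "q^2 - q - 1 > 0" using cub_gold q by simp
      have "val q eseq * (q^2 - 1) = q" using val_e[OF q(1)] .
      moreover have r: "q^2 - 1 > 0" "q \<le> q^2 - 1" using g q by auto
      ultimately show ?thesis
      proof -
        assume e: "val q eseq * (q^2 - 1) = q"
        show ?thesis
        proof (rule ccontr)
          assume "\<not> val q eseq \<le> 1"
          then have "1 * (q^2 - 1) < val q eseq * (q^2 - 1)" using r by (intro mult_strict_right_mono) auto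
          then show False using e r by simp
        qed
      qed
    qed
    ultimately show False using val_e_shift[OF q(1)] q(1)
      by (smt (verit) divide_pos_pos divide_right_mono)
  qed
  show ?thesis unfolding alpha_exp_def using q ex mx by auto
qed

lemma qT1: "qT 1 > 1 \<and> cub (qT 1) = 0"
proof -
  obtain x where x: "1 < x" "x \<le> 2" "cub x = 0" using cub_exists by blast
  have "qT 1 = x"
    unfolding qT_def alphaT1
  proof (rule the_equality)
    show "alpha_exp 1 x bseq" using alpha_b x by blast
  next
    fix y assume y: "alpha_exp 1 y bseq"
    then have y1: "y > 1" by (simp add: alpha_exp_def)
    have "val y bseq = 1" using y val_sums[OF y1 bseq_bd] sums_unique2
      by (auto simp: alpha_exp_def expansion_of_one_def)
    then have "cub y = 0" using val_b_iff[OF y1] by (simp add: cub_def)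
    then show "y = x" using cub_unique y1 x by blast
  qed
  then show ?thesis using x by simp
qed

lemma lex_le_01: "lex_le x y \<Longrightarrow> x 0 = y 0 \<Longrightarrow> x 1 \<le> y 1"
  unfolding lex_le_def lex_less_iff lessat_def
  by (metis One_nat_def less_one linorder_neqE_nat nat_less_le not_less_eq order.refl)

lemma M1_case:
  assumes A: "alpha_exp 1 q a" and V: "in_V 1 a" and a0: "a 0 = 1" and qq: "q > qT 1"
  shows "a 1 > 0"
proof (rule ccontr)
  assume "\<not> a 1 > 0"
  then have a1: "a 1 = 0" by simp
  have bd: "\<forall>i. a i \<le> 1" using A by (simp add: alpha_exp_def expansion_of_one_def in_Omega_def)
  have q1: "q > 1" using A by (simp add: alpha_exp_def)
  have ae: "a k = eseq k" for k
  proof (induction k)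
    case 0 then show ?case using a0 by (simp add: eseq_def)
  next
    case (Suc k)
    have l1: "lex_le (sbar 1 a) (shift a k)" "lex_le (shift a k) a" using V by (auto simp: in_V_def)
    show ?case
    proof (cases "even k")
      case True
      then have "a k = 1" using Suc by (simp add: eseq_def)
      then have "shift a k 1 \<le> a 1" using lex_le_01[OF l1(2)] a0 by (simp add: shift_def)
      then show ?thesis using a1 True by (simp add: shift_def eseq_def)
    next
      case False
      then have "a k = 0" using Suc by (simp add: eseq_def)
      then have "sbar 1 a 1 \<le> shift a k 1" using lex_le_01[OF l1(1)] a0 by (simp add: shift_def sbar_def)
      then show ?thesis using a1 False bd[rule_format, of "Suc k"] by (simp add: shift_def sbar_def eseq_def)
    qed
  qed
  then have "a = eseq" by auto
  then have "val q eseq = 1" using A val_sums[OF q1 bd] sums_unique2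
    by (auto simp: alpha_exp_def expansion_of_one_def)
  then have g: "q^2 = q + 1" using val_e[OF q1] by simp
  define t where "t = qT 1"
  have t: "t > 1" "cub t = 0" "q > t" using qT1 qq t_def by auto
  have f: "cub q - cub t = (q - t) * ((q^2 - q - 1) + (t^2 - t - 1) + q*t)"
    unfolding cub_def by (simp add: algebra_simps power2_eq_square power3_eq_cube)
  have "(q^2 - q - 1) + (t^2 - t - 1) + q*t > 0"
    using cub_gold[OF t(1,2)] g t by (smt (verit) mult_pos_pos)
  then have "cub q > 0" using f t by simp
  moreover have "cub q = 1 - q"
  proof -
    have g2: "q*q = q + 1" using g by (simp add: power2_eq_square)
    have "q^3 = (q*q)*q" by (simp add: power3_eq_cube)
    also have "\<dots> = (q+1)*q" using g2 by simp
    also have "\<dots> = q*q + q" by (simp add: algebra_simps)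
    also have "\<dots> = 2*q+1" using g2 by simp
    finally have c3: "q^3 = 2*q+1" .
    show ?thesis unfolding cub_def c3 g by simp
  qed
  ultimately show False using q1 by simp
qed

lemma iterate_exists:
  assumes "P x0" "\<And>x. P x \<Longrightarrow> \<exists>y. R x y \<and> P y"
  shows "\<exists>f. f 0 = x0 \<and> (\<forall>j. P (f j) \<and> R (f j) (f (Suc j)))"
proof -
  define g where "g = (\<lambda>x. SOME y. R x y \<and> P y)"
  define f where "f = (\<lambda>j. (g ^^ j) x0)"
  have gP: "P x \<Longrightarrow> R x (g x) \<and> P (g x)" for x
    unfolding g_def using assms(2) by (rule someI_ex)
  have Pf: "P (f j)" for j
    by (induction j) (auto simp: f_def assms(1) gP)
  have "f (Suc j) = g (f j)" for j by (simp add: f_def)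
  then have "\<forall>j. P (f j) \<and> R (f j) (f (Suc j))" using Pf gP by simp
  moreover have "f 0 = x0" by (simp add: f_def)
  ultimately show ?thesis by blast
qed

theorem lemma4p2:
  fixes M :: nat and q :: real and a :: "nat \<Rightarrow> nat"
  assumes "M \<ge> 1"
    and "q > qT M"
    and "alpha_exp M q a"
    and "irreducible_seq M a"
    and "a 0 = M"
  shows "\<exists>m :: nat \<Rightarrow> nat. strict_mono m \<and> (\<forall>j. m j > 0)
           \<and> (\<forall>j. a (m j - 1) > 0 \<and> fundamental M (wminus (prefix_word a (m j))))
           \<and> (\<forall>j. m (Suc j) \<le> 2 * m j)
           \<and> m 0 = (if M = 1 then 2 else 1)"
proof -
  have bd: "\<forall>k. a k \<le> M" using assms(3) by (simp add: alpha_exp_def expansion_of_one_def in_Omega_def)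
  have V: "in_V M a" using assms(4) by (simp add: irreducible_seq_def)
  define G where "G = (\<lambda>m. m \<ge> 1 \<and> a (m-1) > 0 \<and> fundamental M (wminus (prefix_word a m)))"
  define m0 where "m0 = (if M = 1 then 2 else (1::nat))"
  have G0: "G m0"
  proof (cases "M = 1")
    case True
    have h: "alpha_exp 1 q a" "in_V 1 a" "a 0 = 1" "q > qT 1" using assms(2,3,5) V True by auto
    have a1: "a 1 > 0" using M1_case[OF h] .
    have "noBar a M 2" unfolding noBar_def
    proof (intro allI impI notI)
      fix i assume h: "1 \<le> i \<and> i < (2::nat)" "\<forall>k<2-i. a (i+k) = M - a k"
      then have "i = 1" by simp
      then have "a (1+0) = M - a 0" using h(2) by simp
      then have "a 1 = M - a 0" by simp
      then show False using a1 assms(5) by simp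
    qed
    then have "fundamental M (wminus (prefix_word a 2))" using noBar_fund[OF V bd, of 2] a1 by simp
    then show ?thesis using True a1 by (simp add: G_def m0_def)
  next
    case False
    then have M2: "M \<ge> 2" using assms(1) by simp
    have w: "length (wminus (prefix_word a 1)) = 1" "wminus (prefix_word a 1) ! 0 = M - 1"
      using wminus_prefix[where m=1 and a=a] assms(5) by auto
    have "fundamental M (wminus (prefix_word a 1))" unfolding fundamental_def using w M2 by simp
    then show ?thesis using False M2 assms(5) by (simp add: G_def m0_def)
  qed
  have st: "\<exists>n. (m < n \<and> n \<le> 2*m) \<and> G n" if "G m" for m
  proof -
    have h: "m \<ge> 1" "a (m-1) > 0" "fundamental M (wminus (prefix_word a m))" using that unfolding G_def by auto
    obtain n where "m < n" "n \<le> 2*m" "a (n-1) > 0" "fundamental M (wminus (prefix_word a n))"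
      using step[OF V bd assms(4) h] by blast
    then show ?thesis unfolding G_def by (intro exI[of _ n]) auto
  qed
  obtain f where f: "f 0 = m0" "\<forall>j. G (f j) \<and> (f j < f (Suc j) \<and> f (Suc j) \<le> 2 * f j)"
    using iterate_exists[of G m0 "\<lambda>m n. m < n \<and> n \<le> 2*m", OF G0 st] by blast
  have "strict_mono f" using f(2) by (simp add: strict_mono_Suc_iff)
  moreover have "\<forall>j. f j > 0"
  proof
    fix j have "f j \<ge> 1" using f(2) unfolding G_def by blast
    then show "f j > 0" by simp
  qed
  moreover have "\<forall>j. a (f j - 1) > 0 \<and> fundamental M (wminus (prefix_word a (f j)))" using f(2) by (auto simp: G_def)
  ultimately show ?thesis using f(1) f(2) m0_def by blast
qed

end
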